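(* Let $\{E_i\}_{i\in I}$ be a family of $F$-Banach spaces, each regarded as a complete bornological $F$-vector space (bounded subsets being the norm-bounded subsets). Then the direct sum $\bigoplus_{i\in I}E_i$ in the category of complete bornological $F$-vector spaces is proper.
   Context: $F$ is a field complete with respect to a non-trivial non-Archimedean absolute value, $F^{\circ}$ its unit ball, $\pi$ a pseudo-uniformiser. A bornology on an $F$-vector space $E$ is a collection of "bounded" subsets closed under subsets, containing singletons, closed under finite unions, under multiplication by nonzero scalars, and under $B\mapsto F^{\circ}B$. The direct sum $\bigoplus_i E_i$ of complete bornological spaces has as underlying space the algebraic direct sum, and a subset is bounded iff it is contained in a finite sum $\sum_i B_i$ of bounded subsets $B_i\subseteq E_i$. A sequence $(e_n)$ in a bornological space $E$ converges (bornologically) to $0$ if there is a bounded $B\subseteq E$ such that for every $\lambda\in F\setminus\{0\}$ there is $N$ with $e_n\in\lambda B$ for all $n\ge N$; it converges to $e$ if $(e-e_n)$ converges to $0$. A subset $C$ is (bornologically) closed if every sequence of elements of $C$ converging to some element converges to an element of $C$. $E$ is proper if its bornology has a basis of closed subsets (a basis being a family of bounded sets such that every bounded set lies in a finite union of members). *)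

theory Defs
  imports Complex_Main
begin

definition nonarch_complete_field :: "('k::field \<Rightarrow> real) \<Rightarrow> bool" where
  "nonarch_complete_field absv \<longleftrightarrow>
     (\<forall>x. 0 \<le> absv x) \<and> (\<forall>x. absv x = 0 \<longleftrightarrow> x = 0) \<and>
     (\<forall>x y. absv (x * y) = absv x * absv y) \<and>
     (\<forall>x y. absv (x + y) \<le> max (absv x) (absv y)) \<and>
     (\<exists>x. x \<noteq> 0 \<and> absv x \<noteq> 1) \<and>
     (\<forall>a :: nat \<Rightarrow> 'k.
        (\<forall>e>0. \<exists>N. \<forall>m\<ge>N. \<forall>n\<ge>N. absv (a m - a n) < e) \<longrightarrow>
        (\<exists>l. \<forall>e>0. \<exists>N. \<forall>n\<ge>N. absv (a n - l) < e))"

definition banach_space ::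
  "('k::field \<Rightarrow> real) \<Rightarrow> ('k \<Rightarrow> 'v::ab_group_add \<Rightarrow> 'v) \<Rightarrow> 'v set \<Rightarrow> ('v \<Rightarrow> real) \<Rightarrow> bool" where
  "banach_space absv scale E N \<longleftrightarrow>
     module.subspace scale E \<and>
     (\<forall>x\<in>E. 0 \<le> N x) \<and> (\<forall>x\<in>E. N x = 0 \<longleftrightarrow> x = 0) \<and>
     (\<forall>c. \<forall>x\<in>E. N (scale c x) = absv c * N x) \<and>
     (\<forall>x\<in>E. \<forall>y\<in>E. N (x + y) \<le> N x + N y) \<and>
     (\<forall>a :: nat \<Rightarrow> 'v. (\<forall>n. a n \<in> E) \<longrightarrow>
        (\<forall>e>0. \<exists>N0. \<forall>m\<ge>N0. \<forall>n\<ge>N0. N (a m - a n) < e) \<longrightarrow>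
        (\<exists>l\<in>E. \<forall>e>0. \<exists>N0. \<forall>n\<ge>N0. N (a n - l) < e))"

definition norm_bounded :: "'v set \<Rightarrow> ('v \<Rightarrow> real) \<Rightarrow> 'v set \<Rightarrow> bool" where
  "norm_bounded E N B \<longleftrightarrow> B \<subseteq> E \<and> (\<exists>r. \<forall>x\<in>B. N x \<le> r)"

definition dsum_carrier :: "('i \<Rightarrow> 'v set) \<Rightarrow> ('i \<Rightarrow> 'v::zero) set" where
  "dsum_carrier E = {f. (\<forall>i. f i \<in> E i) \<and> finite {i. f i \<noteq> 0}}"

definition dsum_scale :: "('k \<Rightarrow> 'v \<Rightarrow> 'v) \<Rightarrow> 'k \<Rightarrow> ('i \<Rightarrow> 'v) \<Rightarrow> ('i \<Rightarrow> 'v)" where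
  "dsum_scale scale c f = (\<lambda>i. scale c (f i))"

definition dsum_bounded ::
  "('i \<Rightarrow> 'v set) \<Rightarrow> ('i \<Rightarrow> 'v \<Rightarrow> real) \<Rightarrow> ('i \<Rightarrow> 'v::zero) set set" where
  "dsum_bounded E N = {S. \<exists>J B. finite J \<and> (\<forall>j\<in>J. norm_bounded (E j) (N j) (B j)) \<and>
        S \<subseteq> {f. (\<forall>j\<in>J. f j \<in> B j) \<and> (\<forall>j. j \<notin> J \<longrightarrow> f j = 0)}}"

text \<open>A bornological space is given by a carrier X, scalar multiplication sm
  and the family bdd of bounded subsets.\<close>
definition born_conv0 :: "('k::field \<Rightarrow> 'a \<Rightarrow> 'a) \<Rightarrow> 'a set set \<Rightarrow> (nat \<Rightarrow> 'a) \<Rightarrow> bool" where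
  "born_conv0 sm bdd e \<longleftrightarrow>
     (\<exists>B\<in>bdd. \<forall>c. c \<noteq> 0 \<longrightarrow> (\<exists>N. \<forall>n\<ge>N. e n \<in> sm c ` B))"

definition born_conv :: "('k::field \<Rightarrow> 'a::minus \<Rightarrow> 'a) \<Rightarrow> 'a set set \<Rightarrow> (nat \<Rightarrow> 'a) \<Rightarrow> 'a \<Rightarrow> bool" where
  "born_conv sm bdd e x \<longleftrightarrow> born_conv0 sm bdd (\<lambda>n. x - e n)"

definition born_closed ::
  "'a set \<Rightarrow> ('k::field \<Rightarrow> 'a::minus \<Rightarrow> 'a) \<Rightarrow> 'a set set \<Rightarrow> 'a set \<Rightarrow> bool" where
  "born_closed X sm bdd C \<longleftrightarrow>
     (\<forall>e x. (\<forall>n. e n \<in> C) \<and> x \<in> X \<and> born_conv sm bdd e x \<longrightarrow>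
            (\<exists>y\<in>C. born_conv sm bdd e y))"

definition born_basis :: "'a set set \<Rightarrow> 'a set set \<Rightarrow> bool" where
  "born_basis bdd \<B> \<longleftrightarrow> \<B> \<subseteq> bdd \<and>
     (\<forall>B\<in>bdd. \<exists>\<F>. finite \<F> \<and> \<F> \<subseteq> \<B> \<and> B \<subseteq> \<Union>\<F>)"

definition born_proper ::
  "'a set \<Rightarrow> ('k::field \<Rightarrow> 'a::minus \<Rightarrow> 'a) \<Rightarrow> 'a set set \<Rightarrow> bool" where
  "born_proper X sm bdd \<longleftrightarrow>
     (\<exists>\<B>. born_basis bdd \<B> \<and> (\<forall>B\<in>\<B>. born_closed X sm bdd B))"

end

theory Submission
  imports Defs
begin

lemma small_absv:
  fixes absv :: "'k::field \<Rightarrow> real"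
  assumes "nonarch_complete_field absv" and "d > 0"
  shows "\<exists>c. c \<noteq> 0 \<and> absv c < d"
proof -
  have nn: "\<forall>x. 0 \<le> absv x" and z: "\<forall>x. absv x = 0 \<longleftrightarrow> x = 0"
    and m: "\<forall>x y. absv (x * y) = absv x * absv y" and ex: "\<exists>x. x \<noteq> 0 \<and> absv x \<noteq> 1"
    using assms(1) unfolding nonarch_complete_field_def by blast+
  have a1: "absv 1 = 1"
  proof -
    have "absv 1 = absv 1 * absv 1" using m by (metis mult_1)
    moreover have "absv 1 \<noteq> 0" using z by simp
    ultimately show ?thesis by (metis mult_cancel_left2)
  qed
  obtain x where x: "x \<noteq> 0" "absv x \<noteq> 1" using ex by blast
  have "\<exists>a. a \<noteq> 0 \<and> absv a < 1"
  proof (cases "absv x < 1")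
    case True then show ?thesis using x by blast
  next
    case False
    then have gt: "absv x > 1" using x by simp
    have "absv x * absv (inverse x) = 1" using m a1 x by (metis right_inverse)
    then have "absv (inverse x) = 1 / absv x" using gt by (simp add: field_simps)
    then have "absv (inverse x) < 1" using gt by simp
    then show ?thesis using x by (metis inverse_nonzero_iff_nonzero)
  qed
  then obtain a where a: "a \<noteq> 0" "absv a < 1" by blast
  have pw: "absv (a ^ n) = absv a ^ n" for n
    by (induction n) (simp_all add: a1 m)
  obtain n where "absv a ^ n < d" using real_arch_pow_inv[OF assms(2) a(2)] by blast
  then show ?thesis using pw a by (metis power_not_zero)
qed

lemma vs_module: "vector_space s \<Longrightarrow> module s"
proof -
  assume "vector_space s"
  then interpret V: vector_space s .
  show ?thesis by (rule V.module_axioms)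
qed

theorem lemma2p24:
  fixes absv :: "'k::field \<Rightarrow> real"
    and scale :: "'k \<Rightarrow> 'v::ab_group_add \<Rightarrow> 'v"
    and E :: "'i \<Rightarrow> 'v set"
    and N :: "'i \<Rightarrow> 'v \<Rightarrow> real"
  assumes "nonarch_complete_field absv"
    and "vector_space scale"
    and "\<forall>i. banach_space absv scale (E i) (N i)"
  shows "born_proper (dsum_carrier E) (dsum_scale scale) (dsum_bounded E N)"
proof -
  define BB where "BB J r = {f. \<forall>j. f j \<in> E j \<and> (j \<in> J \<longrightarrow> N j (f j) \<le> r) \<and> (j \<notin> J \<longrightarrow> f j = 0)}"
    for J :: "'i set" and r :: real
  define \<B> where "\<B> = {BB J r | J r. finite J}"
  have bs: "module.subspace scale (E i)" "\<forall>x\<in>E i. 0 \<le> N i x" "\<forall>x\<in>E i. N i x = 0 \<longleftrightarrow> x = 0"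
    "\<forall>c. \<forall>x\<in>E i. N i (scale c x) = absv c * N i x"
    "\<forall>x\<in>E i. \<forall>y\<in>E i. N i (x + y) \<le> N i x + N i y" for i
    using assms(3) unfolding banach_space_def by blast+
  have sub: "0 \<in> E i" "\<And>x c. x \<in> E i \<Longrightarrow> scale c x \<in> E i" for i
    using bs(1)[of i] unfolding module.subspace_def[OF vs_module[OF assms(2)]]
    by blast+
  have N0: "N i 0 = 0" for i using bs(3)[of i] sub(1)[of i] by blast
  have absnn: "0 \<le> absv c" for c using assms(1) unfolding nonarch_complete_field_def by blast
  have cover: "\<exists>J R. finite J \<and> R \<ge> 0 \<and> S \<subseteq> BB J R" if Sb: "S \<in> dsum_bounded E N" for S
  proof -
    obtain J B where J: "finite J" "\<forall>j\<in>J. norm_bounded (E j) (N j) (B j)"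
      and S: "S \<subseteq> {f. (\<forall>j\<in>J. f j \<in> B j) \<and> (\<forall>j. j \<notin> J \<longrightarrow> f j = 0)}"
      using Sb[unfolded dsum_bounded_def mem_Collect_eq] by iprover
    have "\<forall>j\<in>J. \<exists>r. B j \<subseteq> E j \<and> (\<forall>x\<in>B j. N j x \<le> r)" using J(2) unfolding norm_bounded_def by blast
    then obtain r where r: "\<And>j. j \<in> J \<Longrightarrow> B j \<subseteq> E j \<and> (\<forall>x\<in>B j. N j x \<le> r j)"
      using bchoice[OF \<open>\<forall>j\<in>J. \<exists>r. _\<close>] by blast
    define R where "R = (\<Sum>j\<in>J. \<bar>r j\<bar>)"
    have R0: "R \<ge> 0" unfolding R_def by (simp add: sum_nonneg)
    have rR: "r j \<le> R" if "j \<in> J" for j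
    proof -
      have "\<bar>r j\<bar> \<le> R" unfolding R_def using member_le_sum[of j J "\<lambda>j. \<bar>r j\<bar>"] J(1) that by simp
      then show ?thesis by simp
    qed
    have "S \<subseteq> BB J R"
    proof
      fix f assume "f \<in> S"
      then have f: "\<forall>j\<in>J. f j \<in> B j" "\<forall>j. j \<notin> J \<longrightarrow> f j = 0" using S by blast+
      show "f \<in> BB J R" unfolding BB_def
      proof (intro CollectI allI conjI impI)
        fix j
        show "f j \<in> E j" using f r sub(1) by (cases "j \<in> J") force+
        show "j \<in> J \<Longrightarrow> N j (f j) \<le> R" using f r rR by force
        show "j \<notin> J \<Longrightarrow> f j = 0" using f by blast
      qed
    qed
    then show ?thesis using J(1) R0 by blast
  qed
  have BBbdd: "BB J r \<in> dsum_bounded E N" if "finite J" for J r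
  proof -
    define B where "B j = {v \<in> E j. N j v \<le> r}" for j
    have "\<forall>j\<in>J. norm_bounded (E j) (N j) (B j)" unfolding norm_bounded_def B_def by blast
    moreover have "BB J r \<subseteq> {f. (\<forall>j\<in>J. f j \<in> B j) \<and> (\<forall>j. j \<notin> J \<longrightarrow> f j = 0)}"
      unfolding BB_def B_def by blast
    ultimately show ?thesis unfolding dsum_bounded_def using that by blast
  qed
  have basis: "born_basis (dsum_bounded E N) \<B>"
    unfolding born_basis_def
  proof (intro conjI ballI)
    show "\<B> \<subseteq> dsum_bounded E N" unfolding \<B>_def using BBbdd by blast
  next
    fix S assume "S \<in> dsum_bounded E N"
    then obtain J R where "finite J" "S \<subseteq> BB J R" using cover by blast
    then show "\<exists>\<F>. finite \<F> \<and> \<F> \<subseteq> \<B> \<and> S \<subseteq> \<Union>\<F>"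
      by (intro exI[of _ "{BB J R}"]) (auto simp: \<B>_def)
  qed
  have lim: "t \<le> s" if "\<And>c. c \<noteq> 0 \<Longrightarrow> t \<le> s + absv c * R" "R \<ge> 0" for t s R
  proof (rule ccontr)
    assume "\<not> t \<le> s"
    then have "(t - s) / (R + 1) > 0" using that(2) by simp
    then obtain c where c: "c \<noteq> 0" "absv c < (t - s) / (R + 1)" using small_absv[OF assms(1)] by blast
    then have "absv c * (R + 1) < t - s" using that(2) by (simp add: field_simps)
    moreover have "absv c * R \<le> absv c * (R + 1)" using absnn[of c] by (simp add: mult_left_mono)
    ultimately show False using that(1)[OF c(1)] by linarith
  qed
  have closed: "born_closed (dsum_carrier E) (dsum_scale scale) (dsum_bounded E N) (BB J r)" for J r
    unfolding born_closed_def
  proof (intro allI impI, elim conjE)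
    fix e x assume eC: "\<forall>n. e n \<in> BB J r" and xX: "x \<in> dsum_carrier E"
      and cv: "born_conv (dsum_scale scale) (dsum_bounded E N) e x"
    obtain S where S: "S \<in> dsum_bounded E N"
      and ev: "\<forall>c. c \<noteq> 0 \<longrightarrow> (\<exists>M. \<forall>n\<ge>M. x - e n \<in> dsum_scale scale c ` S)"
      using cv unfolding born_conv_def born_conv0_def by blast
    obtain J' R where R: "R \<ge> 0" "S \<subseteq> BB J' R" using cover[OF S] by blast
    have xE: "x j \<in> E j" for j using xX unfolding dsum_carrier_def by blast
    have key: "N j (x j) \<le> (if j \<in> J then r else 0) + absv c * R" if c: "c \<noteq> 0" for j c
    proof -
      obtain M where "\<forall>n\<ge>M. x - e n \<in> dsum_scale scale c ` S" using ev c by blast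
      then obtain g where g: "g \<in> S" "x - e M = dsum_scale scale c g" by blast
      have gj: "g j \<in> E j" "N j (g j) \<le> R"
      proof -
        have "g \<in> BB J' R" using g(1) R(2) by blast
        then have "g j \<in> E j \<and> (j \<in> J' \<longrightarrow> N j (g j) \<le> R) \<and> (j \<notin> J' \<longrightarrow> g j = 0)"
          unfolding BB_def by blast
        then show "g j \<in> E j" "N j (g j) \<le> R" using N0[of j] R(1) by (cases "j \<in> J'", auto)
      qed
      have eM: "e M j \<in> E j" "N j (e M j) \<le> (if j \<in> J then r else 0)"
        using eC[rule_format, of M] unfolding BB_def by (auto simp: N0)
      have xj: "x j = e M j + scale c (g j)"
        using fun_cong[OF g(2), of j] unfolding dsum_scale_def by (simp add: algebra_simps)
      have "N j (x j) \<le> N j (e M j) + N j (scale c (g j))"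
        unfolding xj using bs(5)[of j] eM(1) sub(2)[OF gj(1)] by blast
      also have "N j (scale c (g j)) = absv c * N j (g j)" using bs(4)[of j] gj(1) by blast
      also have "absv c * N j (g j) \<le> absv c * R" using gj(2) absnn[of c] by (simp add: mult_left_mono)
      finally show ?thesis using eM(2) by linarith
    qed
    have "x \<in> BB J r" unfolding BB_def
    proof (intro CollectI allI conjI impI)
      fix j
      show "x j \<in> E j" by (rule xE)
      show "N j (x j) \<le> r" if "j \<in> J"
        using lim[of "N j (x j)" r R] key[of _ j] that R(1) by simp
      show "x j = 0" if "j \<notin> J"
      proof -
        have "N j (x j) \<le> 0" using lim[of "N j (x j)" 0 R] key[of _ j] that R(1) by simp
        then have "N j (x j) = 0" using bs(2)[of j] xE[of j] by force
        then show ?thesis using bs(3)[of j] xE[of j] by blast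
      qed
    qed
    then show "\<exists>y\<in>BB J r. born_conv (dsum_scale scale) (dsum_bounded E N) e y" using cv by blast
  qed
  show ?thesis unfolding born_proper_def
    using basis closed by (auto simp: \<B>_def)
qed

end
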